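(* Assume the setting below, in which $P=\{(x,y):Ax+Gy\le b\}$ is a translated polyhedral cone with apex $(x^*,y^* )$, $x^*\notin\mathbb{Z}^p$, and $cx+hy$ attains its maximum over $P$ uniquely at $(x^*,y^* )$ with value $\gamma^*$. For $r\in R$ define $d^r:=v^r_{1..m}A-v^r_{m+1}c\in\mathbb{Z}^p$ and $\delta^r:=\lfloor v^r_{1..m}b-v^r_{m+1}\gamma^*\rfloor+1\in\mathbb{Z}$. Then for every $x\in\mathbb{Z}^p$ there exists $r\in R$ with $d^rx\ge\delta^r$ (i.e. the inequalities $-d^rx\le-\delta^r$, $r\in R$, form a valid $|R|$-disjunction), and $d^rx^*<\delta^r$ for all $r\in R$ (the disjunction does not contain $x^*$).
   Context: Setting: $A\in\mathbb{Q}^{m\times p}$, $G\in\mathbb{Q}^{m\times q}$, $b\in\mathbb{Q}^m$, $c\in\mathbb{Q}^p$, $h\in\mathbb{Q}^q$ (row vectors), $P=\{(x,y)\in\mathbb{R}^{p+q}:Ax+Gy\le b\}$, $P_I=\mathrm{conv}\{(x,y)\in P:x\in\mathbb{Z}^p\}$. Let $Q=\{v=(v_{1..m},v_{m+1})\in\mathbb{R}^{m+1}: v_{1..m}G-v_{m+1}h=0,\ v\ge0\}$ (with $v_{1..m}$ a row vector in $\mathbb{R}^m$ and $v_{m+1}\in\mathbb{R}$), and let $\{v^r\}_{r\in R}$ ($R$ finite) contain exactly one representative of each extreme ray of $Q$, each scaled (possible since $Q$ is rational) so that $v^r_{1..m}A-v^r_{m+1}c\in\mathbb{Z}^p$. For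 any $\gamma$, the projection onto the $x$-space of $P_\gamma:=P\cap\{cx+hy\ge\gamma\}$ is $\{x: (v^r_{1..m}A-v^r_{m+1}c)x\le v^r_{1..m}b-v^r_{m+1}\gamma\ \forall r\in R\}$. *)

theory Defs
  imports "HOL-Analysis.Analysis"
begin

definition int_vec :: "real^'n \<Rightarrow> bool" where
  "int_vec x \<longleftrightarrow> (\<forall>j. x $ j \<in> \<int>)"

definition rat_vec :: "real^'n \<Rightarrow> bool" where
  "rat_vec x \<longleftrightarrow> (\<forall>j. x $ j \<in> \<rat>)"

definition rat_mat :: "real^'n^'m \<Rightarrow> bool" where
  "rat_mat M \<longleftrightarrow> (\<forall>i j. M $ i $ j \<in> \<rat>)"

definition polyh :: "real^'p^'m \<Rightarrow> real^'q^'m \<Rightarrow> real^'m \<Rightarrow> ((real^'p) \<times> (real^'q)) set" where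
  "polyh A G b = {(x, y). \<forall>i. (A *v x + G *v y) $ i \<le> b $ i}"

definition translated_cone_apex :: "'a::real_vector set \<Rightarrow> 'a \<Rightarrow> bool" where
  "translated_cone_apex S z \<longleftrightarrow> z \<in> S \<and> (\<forall>w\<in>S. \<forall>t\<ge>0. z + t *\<^sub>R (w - z) \<in> S)"

definition Qcone :: "real^'q^'m \<Rightarrow> real^'q \<Rightarrow> ((real^'m) \<times> real) set" where
  "Qcone G h = {(u, w). u v* G - w *\<^sub>R h = 0 \<and> (\<forall>i. u $ i \<ge> 0) \<and> w \<ge> 0}"

definition halfline :: "'a::real_vector \<Rightarrow> 'a set" where
  "halfline v = (\<lambda>t. t *\<^sub>R v) ` {0..}"

definition extreme_ray :: "'a::real_vector set \<Rightarrow> 'a \<Rightarrow> bool" where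
  "extreme_ray K v \<longleftrightarrow> v \<noteq> 0 \<and> halfline v face_of K"

end

theory Submission imports Defs begin

lemma col_eq: "((u::real^'m) v* (G::real^'q^'m)) $ j = u \<bullet> (G *v axis j 1)"
  by (metis dot_lmul_matrix inner_axis mult.right_neutral inner_real_def)

lemma Qcone_iff:
  "q \<in> Qcone G h \<longleftrightarrow> (\<forall>j. q \<bullet> (G *v axis j 1, -(h$j)) = 0) \<and> (\<forall>i. q \<bullet> (axis i 1, 0) \<ge> 0) \<and> q \<bullet> (0, 1) \<ge> 0"
proof (cases q)
  case (Pair u w)
  have "u v* G - w *\<^sub>R h = 0 \<longleftrightarrow> (\<forall>j. q \<bullet> (G *v axis j 1, -(h$j)) = 0)"
    by (simp add: Pair vec_eq_iff col_eq inner_Pair algebra_simps)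
  moreover have "\<And>i. q \<bullet> (axis i 1, 0) = u $ i" by (simp add: Pair inner_Pair inner_axis)
  ultimately show ?thesis by (simp add: Qcone_def Pair inner_Pair)
qed

lemma closed_Qcone: "closed (Qcone G h)"
proof -
  have "Qcone G h = (\<Inter>j. {q. (G *v axis j 1, -(h$j)) \<bullet> q = 0}) \<inter> (\<Inter>i. {q. (axis i 1, 0) \<bullet> q \<ge> 0}) \<inter> {q. (0, 1) \<bullet> q \<ge> 0}"
    by (auto simp: Qcone_iff inner_commute)
  then show ?thesis
    by (simp add: closed_Int closed_INT closed_hyperplane closed_halfspace_ge)
qed

lemma convex_Qcone: "convex (Qcone G h)"
proof -
  have "Qcone G h = (\<Inter>j. {q. (G *v axis j 1, -(h$j)) \<bullet> q = 0}) \<inter> (\<Inter>i. {q. (axis i 1, 0) \<bullet> q \<ge> 0}) \<inter> {q. (0, 1) \<bullet> q \<ge> 0}"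
    by (auto simp: Qcone_iff inner_commute)
  then show ?thesis
    by (simp add: convex_Int convex_INT convex_hyperplane convex_halfspace_ge)
qed

definition ones :: "(real^'m) \<times> real" where "ones = ((\<chi> i. 1), 1)"

lemma ones_inner: "(u, w) \<bullet> ones = sum (\<lambda>i. u $ i) UNIV + w"
  by (simp add: ones_def inner_Pair inner_vec_def)

lemma Q_ones_ge: "q \<in> Qcone G h \<Longrightarrow> q \<bullet> ones \<ge> 0"
  by (cases q) (auto simp: Qcone_def ones_inner intro!: sum_nonneg add_nonneg_nonneg)

lemma Q_ones_eq0: "q \<in> Qcone G h \<Longrightarrow> q \<bullet> ones = 0 \<Longrightarrow> q = 0"
proof (cases q)
  case (Pair u w)
  assume q: "q \<in> Qcone G h" "q \<bullet> ones = 0"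
  then have nn: "\<forall>i. u $ i \<ge> 0" "w \<ge> 0" by (auto simp: Qcone_def Pair)
  have s: "sum (\<lambda>i. u $ i) UNIV \<ge> 0" using nn by (simp add: sum_nonneg)
  have "sum (\<lambda>i. u $ i) UNIV + w = 0" using q by (simp add: Pair ones_inner)
  then have "sum (\<lambda>i. u $ i) UNIV = 0" "w = 0" using s nn by linarith+
  then have "\<forall>i. u $ i = 0" using nn by (simp add: sum_nonneg_eq_0_iff)
  then show ?thesis using \<open>w = 0\<close> by (simp add: Pair vec_eq_iff zero_prod_def)
qed

lemma Q_scale: "q \<in> Qcone G h \<Longrightarrow> t \<ge> 0 \<Longrightarrow> t *\<^sub>R q \<in> Qcone G h"
  by (simp add: Qcone_iff)

lemma Q_add: "q \<in> Qcone G h \<Longrightarrow> p \<in> Qcone G h \<Longrightarrow> q + p \<in> Qcone G h"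
  by (simp add: Qcone_iff inner_add_left)

lemma halfline_mem: "x \<in> halfline e \<longleftrightarrow> (\<exists>t\<ge>0. x = t *\<^sub>R e)"
  by (auto simp: halfline_def)

lemma convex_halfline: "convex (halfline e)"
proof (rule convexI)
  fix x y and u v :: real assume "x \<in> halfline e" "y \<in> halfline e" "0 \<le> u" "0 \<le> v" "u + v = 1"
  then obtain s t where st: "s \<ge> 0" "t \<ge> 0" "x = s *\<^sub>R e" "y = t *\<^sub>R e" by (auto simp: halfline_mem)
  have "u *\<^sub>R x + v *\<^sub>R y = (u * s + v * t) *\<^sub>R e" using st by (simp add: algebra_simps)
  moreover have "u * s + v * t \<ge> 0" using st \<open>0 \<le> u\<close> \<open>0 \<le> v\<close> by simp
  ultimately show "u *\<^sub>R x + v *\<^sub>R y \<in> halfline e" by (auto simp: halfline_mem)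
qed

lemma face_key:
  assumes ext: "e extreme_point_of (Qcone G h \<inter> {q. q \<bullet> ones = 1})"
    and a: "a \<in> Qcone G h" and b: "b \<in> Qcone G h"
    and x: "x = t *\<^sub>R e" "t \<ge> 0"
    and mu: "0 < \<mu>" "\<mu> < 1" "x = (1 - \<mu>) *\<^sub>R a + \<mu> *\<^sub>R b"
  shows "a \<in> halfline e"
proof -
  let ?T = "Qcone G h \<inter> {q. q \<bullet> ones = 1}"
  have eT: "e \<in> ?T" using ext by (simp add: extreme_point_of_def)
  have sa: "a \<bullet> ones \<ge> 0" "b \<bullet> ones \<ge> 0" using a b Q_ones_ge by blast+
  show ?thesis
  proof (cases "a \<bullet> ones = 0")
    case True
    then have "a = 0" using Q_ones_eq0 a by blast
    then show ?thesis by (auto simp: halfline_mem intro: exI[of _ 0])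
  next
    case na: False
    show ?thesis
    proof (cases "b \<bullet> ones = 0")
      case True
      then have "b = 0" using Q_ones_eq0 b by blast
      then have "(1 - \<mu>) *\<^sub>R a = t *\<^sub>R e" using mu x by simp
      then have "(1/(1 - \<mu>)) *\<^sub>R ((1 - \<mu>) *\<^sub>R a) = (1/(1 - \<mu>)) *\<^sub>R (t *\<^sub>R e)" by simp
      then have "a = (t / (1 - \<mu>)) *\<^sub>R e" using mu by simp
      then show ?thesis using x mu by (auto simp: halfline_mem intro!: exI[of _ "t / (1 - \<mu>)"])
    next
      case nb: False
      define sa' where "sa' = a \<bullet> ones"
      define sb' where "sb' = b \<bullet> ones"
      have pa: "sa' > 0" "sb' > 0" using sa na nb by (auto simp: sa'_def sb'_def)
      define a' where "a' = (1/sa') *\<^sub>R a"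
      define b' where "b' = (1/sb') *\<^sub>R b"
      have a'T: "a' \<in> ?T" using pa a by (simp add: a'_def Q_scale sa'_def)
      have b'T: "b' \<in> ?T" using pa b by (simp add: b'_def Q_scale sb'_def)
      have "x \<bullet> ones = t" using eT x by simp
      moreover have "x \<bullet> ones = (1 - \<mu>) * sa' + \<mu> * sb'" using mu by (simp add: sa'_def sb'_def inner_add_left)
      ultimately have tpos: "t > 0" using pa mu by (smt (verit) mult_pos_pos)
      define l where "l = (1 - \<mu>) * sa' / t"
      have "\<mu> * sb' > 0" "(1 - \<mu>) * sa' > 0" using pa mu by simp_all
      then have lt: "(1 - \<mu>) * sa' < t" using \<open>x \<bullet> ones = t\<close> \<open>x \<bullet> ones = (1 - \<mu>) * sa' + \<mu> * sb'\<close> by linarith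
      have teq: "t = (1 - \<mu>) * sa' + \<mu> * sb'" using \<open>x \<bullet> ones = t\<close> \<open>x \<bullet> ones = (1 - \<mu>) * sa' + \<mu> * sb'\<close> by simp
      have l0: "0 < l" unfolding l_def by (rule divide_pos_pos) fact+
      have l1: "l < 1" unfolding l_def using divide_less_eq_1_pos[OF tpos] lt by simp
      note l = l0 l1
      have "1 - l = \<mu> * sb' / t" using tpos teq
        by (simp add: l_def field_simps)
      have aa: "a = sa' *\<^sub>R a'" "b = sb' *\<^sub>R b'" using pa by (simp_all add: a'_def b'_def)
      have "t *\<^sub>R e = ((1 - \<mu>) * sa') *\<^sub>R a' + (\<mu> * sb') *\<^sub>R b'"
        using x mu aa by simp
      then have "(1/t) *\<^sub>R (t *\<^sub>R e) = (1/t) *\<^sub>R (((1 - \<mu>) * sa') *\<^sub>R a' + (\<mu> * sb') *\<^sub>R b')" by simp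
      then have e_eq: "e = l *\<^sub>R a' + (1 - l) *\<^sub>R b'"
        using tpos \<open>1 - l = \<mu> * sb' / t\<close> by (simp add: l_def scaleR_add_right)
      have "a' = b'"
      proof (rule ccontr)
        assume "a' \<noteq> b'"
        then have "e \<in> open_segment a' b'"
          using l e_eq by (auto simp: in_segment intro!: exI[of _ "1 - l"])
        then show False using ext a'T b'T by (auto simp: extreme_point_of_def)
      qed
      then have "e = a'" using e_eq by (simp add: algebra_simps flip: scaleR_add_left)
      then have "a = sa' *\<^sub>R e" using pa by (simp add: a'_def)
      then show ?thesis using pa by (auto simp: halfline_mem intro!: exI[of _ sa'])
    qed
  qed
qed

lemma extreme_to_ray:
  assumes ext: "e extreme_point_of (Qcone G h \<inter> {q. q \<bullet> ones = 1})"
  shows "extreme_ray (Qcone G h) e"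
proof -
  have eT: "e \<in> Qcone G h" "e \<bullet> ones = 1" using ext by (auto simp: extreme_point_of_def)
  have "e \<noteq> 0" using eT by auto
  moreover have "halfline e face_of Qcone G h"
    unfolding face_of_def
  proof (intro conjI ballI impI)
    show "halfline e \<subseteq> Qcone G h" using eT(1) by (auto simp: halfline_def intro: Q_scale)
    show "convex (halfline e)" by (rule convex_halfline)
    fix a b x assume ab: "a \<in> Qcone G h" "b \<in> Qcone G h" and "x \<in> halfline e" and seg: "x \<in> open_segment a b"
    then obtain t where t: "x = t *\<^sub>R e" "t \<ge> 0" by (auto simp: halfline_mem)
    from seg obtain \<mu> where mu: "0 < \<mu>" "\<mu> < 1" "x = (1 - \<mu>) *\<^sub>R a + \<mu> *\<^sub>R b" by (auto simp: in_segment)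
    show "a \<in> halfline e" by (rule face_key[OF ext ab t mu])
    have mu': "0 < 1 - \<mu>" "1 - \<mu> < 1" "x = (1 - (1 - \<mu>)) *\<^sub>R b + (1 - \<mu>) *\<^sub>R a" using mu by auto
    show "b \<in> halfline e" by (rule face_key[OF ext ab(2) ab(1) t mu'])
  qed
  ultimately show ?thesis by (simp add: extreme_ray_def)
qed

lemma ray_exists:
  assumes q: "q \<in> Qcone G h" and qg: "q \<bullet> g > 0"
  shows "\<exists>e. extreme_ray (Qcone G h) e \<and> e \<bullet> g > 0"
proof -
  let ?T = "Qcone G h \<inter> {q. q \<bullet> ones = 1}"
  have "q \<noteq> 0" using qg by auto
  then have sp: "q \<bullet> ones > 0" using Q_ones_ge[OF q] Q_ones_eq0[OF q] by force
  define q' where "q' = (1 / (q \<bullet> ones)) *\<^sub>R q"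
  have "q' \<in> Qcone G h" unfolding q'_def using sp by (intro Q_scale q) simp
  then have q'T: "q' \<in> ?T" using sp by (simp add: q'_def)
  have q'g: "q' \<bullet> g > 0" using sp qg by (simp add: q'_def)
  have bnd: "bounded ?T"
    unfolding bounded_iff
  proof (intro exI[of _ 1] ballI)
    fix p assume pT: "p \<in> ?T"
    obtain u w where p: "p = (u, w)" by (cases p)
    have nn: "\<forall>i. u $ i \<ge> 0" "w \<ge> 0" using pT by (auto simp: Qcone_def p)
    have "norm p \<le> norm u + norm w" unfolding p by (rule norm_Pair_le)
    also have "\<dots> \<le> sum (\<lambda>i. \<bar>u $ i\<bar>) UNIV + norm w" using norm_le_l1_cart by simp
    also have "\<dots> = sum (\<lambda>i. u $ i) UNIV + w" using nn by simp
    also have "\<dots> = 1" using pT by (simp add: p ones_inner)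
    finally show "norm p \<le> 1" .
  qed
  have "?T = Qcone G h \<inter> {q. ones \<bullet> q = 1}" by (auto simp: inner_commute)
  then have cl: "closed ?T" using closed_Qcone closed_hyperplane by (metis closed_Int)
  have cv: "convex ?T"
    using convex_Qcone convex_hyperplane \<open>?T = Qcone G h \<inter> {q. ones \<bullet> q = 1}\<close> by (metis convex_Int)
  have KM: "?T = convex hull {x. x extreme_point_of ?T}"
    using Krein_Milman_Minkowski bnd cl cv compact_eq_bounded_closed by blast
  show ?thesis
  proof (rule ccontr)
    assume "\<not> ?thesis"
    then have "{x. x extreme_point_of ?T} \<subseteq> {p. g \<bullet> p \<le> 0}"
      using extreme_to_ray by (force simp: inner_commute)
    then have "convex hull {x. x extreme_point_of ?T} \<subseteq> {p. g \<bullet> p \<le> 0}"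
      by (simp add: convex_halfspace_le hull_minimal)
    then show False using q'T q'g KM by (auto simp: inner_commute)
  qed
qed

lemma mv_neg: "(M::real^'a^'b) *v (- x) = - (M *v x)"
  by (simp add: vec_eq_iff matrix_vector_mult_def sum_negf)

lemma farkas:
  fixes G :: "real^'q^'m" and h :: "real^'q" and \<beta> :: "(real^'m) \<times> real"
  assumes nf: "\<not>(\<exists>y s t. (\<forall>i. 0 \<le> s$i) \<and> 0 \<le> t \<and> \<beta> = (G *v y + s, -(h \<bullet> y) + t))"
  shows "\<exists>q \<in> Qcone G h. q \<bullet> \<beta> < 0"
proof -
  define F where "F = {(G *v y + s, -(h \<bullet> y) + t) | y s t. (\<forall>i. 0 \<le> s$i) \<and> 0 \<le> (t::real)}"
  define S where "S = range (\<lambda>j. (G *v axis j 1, -(h$j))) \<union> range (\<lambda>j. -(G *v axis j 1, -(h$j)))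
     \<union> range (\<lambda>i. (axis i 1, 0::real)) \<union> {(0, 1)}"
  have ccF: "convex_cone F"
    unfolding convex_cone_iff
  proof (intro conjI ballI allI impI)
    show "0 \<in> F" unfolding F_def
      by (rule CollectI, rule exI[of _ 0], rule exI[of _ 0], rule exI[of _ 0]) (simp add: zero_prod_def)
    fix x y assume "x \<in> F" "y \<in> F"
    then obtain y1 s1 t1 y2 s2 t2 where
      "x = (G *v y1 + s1, -(h \<bullet> y1) + t1)" "\<forall>i. 0 \<le> s1$i" "0 \<le> t1"
      "y = (G *v y2 + s2, -(h \<bullet> y2) + t2)" "\<forall>i. 0 \<le> s2$i" "0 \<le> t2"
      unfolding F_def by blast
      note xy = this
    have eq: "x + y = (G *v (y1 + y2) + (s1 + s2), -(h \<bullet> (y1 + y2)) + (t1 + t2))"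
      unfolding xy(1) xy(4) matrix_vector_right_distrib inner_add_right by (simp add: algebra_simps)
    have nn: "\<forall>i. 0 \<le> (s1 + s2)$i" "0 \<le> t1 + t2" using xy by simp_all
    show "x + y \<in> F" unfolding F_def using eq nn by blast
  next
    fix x and c :: real assume "x \<in> F" "0 \<le> c"
    then obtain y1 s1 t1 where
      "x = (G *v y1 + s1, -(h \<bullet> y1) + t1)" "\<forall>i. 0 \<le> s1$i" "0 \<le> t1"
      unfolding F_def by blast
      note xx = this
    have eq: "c *\<^sub>R x = (G *v (c *\<^sub>R y1) + c *\<^sub>R s1, -(h \<bullet> (c *\<^sub>R y1)) + c * t1)"
      unfolding xx(1) matrix_vector_mult_scaleR by (simp add: scaleR_add_right right_diff_distrib)
    have nn: "\<forall>i. 0 \<le> (c *\<^sub>R s1)$i" "0 \<le> c * t1" using xx \<open>0 \<le> c\<close> by simp_all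
    show "c *\<^sub>R x \<in> F" unfolding F_def using eq nn by blast
  qed
  have hax: "\<And>j. h \<bullet> axis j 1 = h $ j" by (simp add: inner_axis)
  have SF: "S \<subseteq> F"
  proof -
    have "(G *v axis j 1, -(h$j)) \<in> F" for j unfolding F_def
      by (intro CollectI exI[of _ "axis j 1"] exI[of _ 0] exI[of _ 0]) (simp add: hax)
    moreover have "-(G *v axis j 1, -(h$j)) \<in> F" for j unfolding F_def
      by (intro CollectI exI[of _ "-axis j 1"] exI[of _ 0] exI[of _ 0]) (simp add: hax mv_neg)
    moreover have "(axis i 1, 0::real) \<in> F" for i unfolding F_def
      by (intro CollectI exI[of _ 0] exI[of _ "axis i 1"] exI[of _ 0]) (simp add: axis_def)
    moreover have "(0, 1) \<in> F" unfolding F_def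
      by (intro CollectI exI[of _ 0] exI[of _ 0] exI[of _ 1]) simp
    ultimately show ?thesis unfolding S_def by (intro subsetI) (elim UnE insertE rangeE emptyE; simp)
  qed
  define K where "K = convex_cone hull S"
  have KF: "K \<subseteq> F" unfolding K_def using SF ccF by (simp add: hull_minimal)
  have bK: "\<beta> \<notin> K"
  proof
    assume "\<beta> \<in> K"
    then have "\<beta> \<in> F" using KF by (rule subsetD[rotated])
    then obtain y s t where "\<beta> = (G *v y + s, -(h \<bullet> y) + t)" "\<forall>i. 0 \<le> s$i" "0 \<le> t"
      unfolding F_def by blast
    then show False using nf by blast
  qed
  have finS: "finite S" unfolding S_def by simp
  have clK: "closed K" unfolding K_def using finS by (rule closed_convex_cone_hull)
  have cvK: "convex K" unfolding K_def by (rule convex_convex_cone_hull)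
  obtain a b where ab: "a \<bullet> \<beta> < b" "\<forall>x\<in>K. b < a \<bullet> x"
    using separating_hyperplane_closed_point[OF cvK clK bK] by blast
  have "0 \<in> K" unfolding K_def by (rule convex_cone_hull_contains_0)
  then have b0: "b < 0" using ab by auto
  have pos: "a \<bullet> k \<ge> 0" if "k \<in> K" for k
  proof (rule ccontr)
    assume "\<not> ?thesis"
    then have neg: "a \<bullet> k < 0" by simp
    define c where "c = b / (a \<bullet> k)"
    have "c \<ge> 0" using b0 neg by (simp add: c_def divide_nonpos_neg less_imp_le)
    then have "c *\<^sub>R k \<in> K" unfolding K_def using that K_def by (simp add: convex_cone_hull_mul)
    moreover have "a \<bullet> (c *\<^sub>R k) = b" using neg by (simp add: c_def)
    ultimately show False using ab by (metis less_irrefl)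
  qed
  have SK: "S \<subseteq> K" unfolding K_def by (rule hull_subset)
  have "a \<in> Qcone G h"
    unfolding Qcone_iff
  proof (intro conjI allI)
    fix j
    have "(G *v axis j 1, -(h$j)) \<in> S" "-(G *v axis j 1, -(h$j)) \<in> S" unfolding S_def by (rule UnI1, rule UnI1, rule UnI1, rule rangeI) (rule UnI1, rule UnI1, rule UnI2, rule rangeI)
    then have "a \<bullet> (G *v axis j 1, -(h$j)) \<ge> 0" "a \<bullet> (-(G *v axis j 1, -(h$j))) \<ge> 0"
      using pos SK by (meson subsetD)+
    then show "a \<bullet> (G *v axis j 1, -(h$j)) = 0" unfolding inner_minus_right by linarith
  next
    fix i
    have "(axis i 1, 0::real) \<in> S" unfolding S_def by (rule UnI1, rule UnI2, rule rangeI)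
    then show "a \<bullet> (axis i 1, 0) \<ge> 0" using pos SK by (meson subsetD)
  next
    have "(0, 1) \<in> S" unfolding S_def by (rule UnI2, rule insertI1)
    then show "a \<bullet> (0, 1) \<ge> 0" using pos SK by (meson subsetD)
  qed
  moreover have "a \<bullet> \<beta> < 0" using ab b0 by linarith
  ultimately show ?thesis by blast
qed

lemma key_identity:
  "(u v* (A::real^'p^'m) - w *\<^sub>R c) \<bullet> x - (u \<bullet> b - w * \<gamma>) = (u, w) \<bullet> (A *v x - b, \<gamma> - c \<bullet> x)"
  by (simp add: inner_diff_left inner_diff_right dot_lmul_matrix algebra_simps)

lemma int_inner: "int_vec d \<Longrightarrow> int_vec x \<Longrightarrow> d \<bullet> x \<in> \<int>"
  unfolding int_vec_def inner_vec_def by (auto intro!: Ints_sum Ints_mult)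

lemma Qmem: "extreme_ray K v \<Longrightarrow> v \<in> K"
  unfolding extreme_ray_def face_of_def halfline_def by (force intro: image_eqI[of v _ 1])

lemma valid_ineq:
  assumes q: "(u, w) \<in> Qcone G h" and P: "(x, y) \<in> polyh A G b"
  shows "(u v* A - w *\<^sub>R c) \<bullet> x \<le> u \<bullet> b - w * (c \<bullet> x + h \<bullet> y)"
proof -
  have nn: "\<forall>i. u $ i \<ge> 0" and uG: "u v* G = w *\<^sub>R h" using q by (auto simp: Qcone_def)
  have le: "\<forall>i. (A *v x + G *v y) $ i \<le> b $ i" using P by (simp add: polyh_def)
  have "u \<bullet> (A *v x + G *v y) \<le> u \<bullet> b"
    unfolding inner_vec_def using nn le by (auto intro!: sum_mono mult_left_mono)
  moreover have "u \<bullet> (G *v y) = w * (h \<bullet> y)" using uG by (metis dot_lmul_matrix inner_scaleR_left)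
  ultimately show ?thesis
    by (simp add: inner_diff_left inner_add_right dot_lmul_matrix algebra_simps)
qed

theorem lemma2p12:
  fixes A :: "real^'p^'m" and G :: "real^'q^'m" and b :: "real^'m"
    and c :: "real^'p" and h :: "real^'q"
    and xs :: "real^'p" and ys :: "real^'q"
    and R :: "'r set" and V :: "'r \<Rightarrow> (real^'m) \<times> real"
  assumes rat: "rat_mat A" "rat_mat G" "rat_vec b" "rat_vec c" "rat_vec h"
    and cone: "translated_cone_apex (polyh A G b) (xs, ys)"
    and frac: "\<not> int_vec xs"
    and uniq_max: "\<forall>(x, y) \<in> polyh A G b. (x, y) \<noteq> (xs, ys) \<longrightarrow> c \<bullet> x + h \<bullet> y < c \<bullet> xs + h \<bullet> ys"
    and finR: "finite R"
    and Vext: "\<forall>r\<in>R. extreme_ray (Qcone G h) (V r)"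
    and Vrep: "\<forall>v. extreme_ray (Qcone G h) v \<longrightarrow> (\<exists>!r. r \<in> R \<and> halfline (V r) = halfline v)"
    and Vint: "\<forall>r\<in>R. int_vec (fst (V r) v* A - snd (V r) *\<^sub>R c)"
  shows "(\<forall>x. int_vec x \<longrightarrow>
            (\<exists>r\<in>R. (fst (V r) v* A - snd (V r) *\<^sub>R c) \<bullet> x \<ge>
               of_int (\<lfloor>fst (V r) \<bullet> b - snd (V r) * (c \<bullet> xs + h \<bullet> ys)\<rfloor> + 1)))
       \<and> (\<forall>r\<in>R. (fst (V r) v* A - snd (V r) *\<^sub>R c) \<bullet> xs <
               of_int (\<lfloor>fst (V r) \<bullet> b - snd (V r) * (c \<bullet> xs + h \<bullet> ys)\<rfloor> + 1))"
proof -
  define \<gamma> where "\<gamma> = c \<bullet> xs + h \<bullet> ys"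
  have xsP: "(xs, ys) \<in> polyh A G b" using cone by (simp add: translated_cone_apex_def)
  have VQ: "V r \<in> Qcone G h" if "r \<in> R" for r using Vext that Qmem by blast
  have part2: "\<forall>r\<in>R. (fst (V r) v* A - snd (V r) *\<^sub>R c) \<bullet> xs <
               of_int (\<lfloor>fst (V r) \<bullet> b - snd (V r) * (c \<bullet> xs + h \<bullet> ys)\<rfloor> + 1)"
  proof
    fix r assume "r \<in> R"
    have "(fst (V r), snd (V r)) \<in> Qcone G h" using VQ[OF \<open>r \<in> R\<close>] by simp
    from valid_ineq[OF this xsP, of c]
    show "(fst (V r) v* A - snd (V r) *\<^sub>R c) \<bullet> xs <
               of_int (\<lfloor>fst (V r) \<bullet> b - snd (V r) * (c \<bullet> xs + h \<bullet> ys)\<rfloor> + 1)"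
      by linarith
  qed
  have part1: "\<exists>r\<in>R. (fst (V r) v* A - snd (V r) *\<^sub>R c) \<bullet> x \<ge>
               of_int (\<lfloor>fst (V r) \<bullet> b - snd (V r) * (c \<bullet> xs + h \<bullet> ys)\<rfloor> + 1)"
    if xint: "int_vec x" for x
  proof (rule ccontr)
    assume "\<not> ?thesis"
    then have lt: "\<forall>r\<in>R. (fst (V r) v* A - snd (V r) *\<^sub>R c) \<bullet> x <
               of_int (\<lfloor>fst (V r) \<bullet> b - snd (V r) * \<gamma>\<rfloor> + 1)" by (auto simp: \<gamma>_def not_le)
    have le: "(fst (V r) v* A - snd (V r) *\<^sub>R c) \<bullet> x \<le> fst (V r) \<bullet> b - snd (V r) * \<gamma>"
      if "r \<in> R" for r
    proof -
      have "(fst (V r) v* A - snd (V r) *\<^sub>R c) \<bullet> x \<in> \<int>"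
        using int_inner Vint that xint by blast
      then obtain k where k: "(fst (V r) v* A - snd (V r) *\<^sub>R c) \<bullet> x = of_int k" by (auto elim: Ints_cases)
      have "k < \<lfloor>fst (V r) \<bullet> b - snd (V r) * \<gamma>\<rfloor> + 1" using lt that k by (metis of_int_less_iff)
      then have "k \<le> \<lfloor>fst (V r) \<bullet> b - snd (V r) * \<gamma>\<rfloor>" by simp
      then show ?thesis using k le_floor_iff by metis
    qed
    have "\<exists>y. (x, y) \<in> polyh A G b \<and> c \<bullet> x + h \<bullet> y \<ge> \<gamma>"
    proof (rule ccontr)
      assume noy: "\<not> ?thesis"
      have "\<not>(\<exists>y s t. (\<forall>i. 0 \<le> s$i) \<and> 0 \<le> t \<and> (b - A *v x, c \<bullet> x - \<gamma>) = (G *v y + s, -(h \<bullet> y) + t))"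
      proof
        assume "\<exists>y s t. (\<forall>i. 0 \<le> s$i) \<and> 0 \<le> t \<and> (b - A *v x, c \<bullet> x - \<gamma>) = (G *v y + s, -(h \<bullet> y) + t)"
        then obtain y s t where yst: "\<forall>i. 0 \<le> s$i" "0 \<le> t" "b - A *v x = G *v y + s" "c \<bullet> x - \<gamma> = -(h \<bullet> y) + t"
          by auto
        have "\<forall>i. (A *v x + G *v y) $ i \<le> b $ i"
        proof
          fix i
          have "b $ i = (A *v x) $ i + (G *v y) $ i + s $ i" using arg_cong[OF yst(3), of "\<lambda>v. v $ i"] by simp
          then show "(A *v x + G *v y) $ i \<le> b $ i" using yst(1) by simp
        qed
        then have "(x, y) \<in> polyh A G b" by (simp add: polyh_def)
        moreover have "c \<bullet> x + h \<bullet> y \<ge> \<gamma>" using yst by linarith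
        ultimately show False using noy by blast
      qed
      from farkas[OF this] obtain q where q: "q \<in> Qcone G h" "q \<bullet> (b - A *v x, c \<bullet> x - \<gamma>) < 0" by blast
      have "q \<bullet> (A *v x - b, \<gamma> - c \<bullet> x) = - (q \<bullet> (b - A *v x, c \<bullet> x - \<gamma>))"
        by (cases q) (simp add: inner_diff_right right_diff_distrib)
      then have "q \<bullet> (A *v x - b, \<gamma> - c \<bullet> x) > 0" using q by linarith
      from ray_exists[OF q(1) this] obtain e where e: "extreme_ray (Qcone G h) e" "e \<bullet> (A *v x - b, \<gamma> - c \<bullet> x) > 0"
        by blast
      from Vrep e(1) obtain r where r: "r \<in> R" "halfline (V r) = halfline e" by blast
      have "e \<in> halfline e" unfolding halfline_def by (rule image_eqI[of _ _ 1]) auto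
      then obtain t where t: "t \<ge> 0" "e = t *\<^sub>R V r" using r by (auto simp: halfline_def)
      have "V r \<bullet> (A *v x - b, \<gamma> - c \<bullet> x) > 0"
      proof -
        have "t * (V r \<bullet> (A *v x - b, \<gamma> - c \<bullet> x)) > 0" using e(2) t by simp
        then show ?thesis using t(1) by (simp add: zero_less_mult_iff)
      qed
      moreover have "V r \<bullet> (A *v x - b, \<gamma> - c \<bullet> x) =
          (fst (V r) v* A - snd (V r) *\<^sub>R c) \<bullet> x - (fst (V r) \<bullet> b - snd (V r) * \<gamma>)"
        using key_identity[of "fst (V r)" A "snd (V r)" c x b \<gamma>] by simp
      ultimately show False using le[OF r(1)] by linarith
    qed
    then obtain y where y: "(x, y) \<in> polyh A G b" "c \<bullet> x + h \<bullet> y \<ge> \<gamma>" by blast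
    have "(x, y) = (xs, ys)"
    proof (rule ccontr)
      assume "(x, y) \<noteq> (xs, ys)"
      then have "c \<bullet> x + h \<bullet> y < \<gamma>" using uniq_max y(1) unfolding \<gamma>_def by blast
      then show False using y(2) by linarith
    qed
    then show False using frac xint by simp
  qed
  show ?thesis using part1 part2 by blast
qed

end
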